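(* Let $B$ be an $n\times n$ matrix of non-negative integers whose last $n-m$ rows are zero, where $m\neq n$. Suppose $A=J_{nm}+B=(a_{kl})$ is irreducible and its top-left $m\times m$ corner is irreducible. Let $x_1,\dots,x_n$ be non-negative integers, not all zero, and let $m<j\le n$. Let $A'$ be the $(n+1)\times(n+1)$ matrix defined as follows: - its first row is $(x_j,x_1,x_2,\dots,x_n)$; - for $i=1,\dots,m$, its $(i+1)$-st row is $(a_{ij},a_{i1},a_{i2},\dots,a_{in})$; - its last $n-m$ rows consist entirely of $\infty$. Then $A\sim_M A'$.
   Context: $J_{nm}$ ($0\le m\le n$) is the $n\times n$ matrix whose $i$-th row, for $i\le m$, has a $1$ in position $i$ and $0$ elsewhere, and whose last $n-m$ rows consist entirely of $\infty$. Arithmetic convention: $\infty+a=\infty$. For an $X\times X$ matrix $A$ with entries in $\{0,1,2,\dots\}\cup\{\infty\}$, $G_A$ is the graph with vertex set $X$ and exactly $A(x,y)$ edges from $x$ to $y$. A matrix $A$ is irreducible if $G_A$ is strongly connected. For matrices, $A\sim_M B$ means $G_A\sim_M G_B$. A graph may have multiple edges and loops. A source receives no edges, a sink emits no edges, and an infinite emitter emits infinitely many edges. A vertex is singular if it is a sink or infinite emitter, and regular otherwise. Move-equivalence $\sim_M$ is the smallest equivalence relation on graphs with finitely many vertices such that $G\sim_M E$ whenever $E$ is isomorphic to a graph obtained from $G$ by one of the following moves. (S) Delete a regular source together with the edges it emits. (R) For a regular vertex $u$ emitting exactly one edge $f$, with $r(f)\neq u$, and all of whose incoming edges have the same source $v$: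 delete $u$, $f$ and the edges into $u$, and add for each $e\in r^{-1}(u)$ an edge $[ef]$ from $v$ to $r(f)$. (O) Out-splitting at a non-sink $v$ along a partition $\mathcal E_1,\dots,\mathcal E_n$ of $s^{-1}(v)$ with at most one infinite part. Replace $v$ by $v^1,\dots,v^n$. Each edge $e$ into $v$ becomes copies $e^1,\dots,e^n$ with $r(e^i)=v^i$ and source $s(e)$, or source $v^j$ if $s(e)=v$ and $e\in\mathcal E_j$. An edge from $v$ to $w\neq v$ lying in $\mathcal E_i$ gets source $v^i$. (I) In-splitting at a regular non-source $v$ along a partition $\mathcal E_1,\dots,\mathcal E_n$ of $r^{-1}(v)$. Replace $v$ by $v^1,\dots,v^n$. Each edge $e$ out of $v$ becomes copies $e^1,\dots,e^n$ with $s(e^i)=v^i$ and range $r(e)$, or range $v^j$ if $r(e)=v$ and $e\in\mathcal E_j$. An edge into $v$ from $w\neq v$ lying in $\mathcal E_i$ gets range $v^i$. *)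

theory Defs
  imports Main "HOL-Library.Extended_Nat" "HOL-Library.Nat_Bijection"
begin

record ('v,'e) dgraph =
  gV :: "'v set"
  gE :: "'e set"
  gs :: "'e \<Rightarrow> 'v"
  gr :: "'e \<Rightarrow> 'v"

definition wf_graph :: "('v,'e) dgraph \<Rightarrow> bool" where
  "wf_graph G \<longleftrightarrow> finite (gV G) \<and>
     (\<forall>e\<in>gE G. gs G e \<in> gV G \<and> gr G e \<in> gV G)"

definition graph_iso :: "('v,'e) dgraph \<Rightarrow> ('w,'f) dgraph \<Rightarrow> bool" where
  "graph_iso G H \<longleftrightarrow> (\<exists>\<phi> \<psi>. bij_betw \<phi> (gV G) (gV H) \<and> bij_betw \<psi> (gE G) (gE H) \<and>
     (\<forall>e\<in>gE G. gs H (\<psi> e) = \<phi> (gs G e) \<and> gr H (\<psi> e) = \<phi> (gr G e)))"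

definition out_edges :: "('v,'e) dgraph \<Rightarrow> 'v \<Rightarrow> 'e set" where
  "out_edges G v = {e\<in>gE G. gs G e = v}"

definition in_edges :: "('v,'e) dgraph \<Rightarrow> 'v \<Rightarrow> 'e set" where
  "in_edges G v = {e\<in>gE G. gr G e = v}"

definition is_source :: "('v,'e) dgraph \<Rightarrow> 'v \<Rightarrow> bool" where
  "is_source G v \<longleftrightarrow> in_edges G v = {}"

definition is_sink :: "('v,'e) dgraph \<Rightarrow> 'v \<Rightarrow> bool" where
  "is_sink G v \<longleftrightarrow> out_edges G v = {}"

definition inf_emitter :: "('v,'e) dgraph \<Rightarrow> 'v \<Rightarrow> bool" where
  "inf_emitter G v \<longleftrightarrow> infinite (out_edges G v)"

definition is_regular :: "('v,'e) dgraph \<Rightarrow> 'v \<Rightarrow> bool" where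
  "is_regular G v \<longleftrightarrow> \<not> is_sink G v \<and> \<not> inf_emitter G v"

definition S_ok :: "('v,'e) dgraph \<Rightarrow> 'v \<Rightarrow> bool" where
  "S_ok G v \<longleftrightarrow> v \<in> gV G \<and> is_regular G v \<and> is_source G v"

definition S_move :: "('v,'e) dgraph \<Rightarrow> 'v \<Rightarrow> ('v,'e) dgraph" where
  "S_move G v = \<lparr> gV = gV G - {v}, gE = {e\<in>gE G. gs G e \<noteq> v}, gs = gs G, gr = gr G \<rparr>"

text \<open>(R) reduction at a vertex u emitting exactly one edge f; the new edge [ef] is Inr e\<close>
definition R_ok :: "('v,'e) dgraph \<Rightarrow> 'v \<Rightarrow> 'e \<Rightarrow> bool" where
  "R_ok G u f \<longleftrightarrow> u \<in> gV G \<and> f \<in> gE G \<and> out_edges G u = {f} \<and> gr G f \<noteq> u \<and>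
     (\<exists>v. \<forall>e\<in>in_edges G u. gs G e = v)"

definition R_move :: "('v,'e) dgraph \<Rightarrow> 'v \<Rightarrow> 'e \<Rightarrow> ('v,'e + 'e) dgraph" where
  "R_move G u f = \<lparr> gV = gV G - {u},
     gE = Inl ` {e\<in>gE G. e \<noteq> f \<and> gr G e \<noteq> u} \<union> Inr ` in_edges G u,
     gs = case_sum (gs G) (gs G),
     gr = case_sum (gr G) (\<lambda>_. gr G f) \<rparr>"

text \<open>A partition of a set X into k nonempty parts, given by an index function p
  (part i, for i < k, is {e \<in> X. p e = i}).\<close>
definition is_partition :: "'e set \<Rightarrow> nat \<Rightarrow> ('e \<Rightarrow> nat) \<Rightarrow> bool" where
  "is_partition X k p \<longleftrightarrow> (\<forall>e\<in>X. p e < k) \<and> (\<forall>i<k. \<exists>e\<in>X. p e = i)"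

text \<open>(O) out-splitting at v; new vertices (v,i), i<k; other vertices w become (w,0);
  edge copies e^i are (e,i); edges not into v become (e,0).\<close>
definition O_ok :: "('v,'e) dgraph \<Rightarrow> 'v \<Rightarrow> nat \<Rightarrow> ('e \<Rightarrow> nat) \<Rightarrow> bool" where
  "O_ok G v k p \<longleftrightarrow> v \<in> gV G \<and> \<not> is_sink G v \<and> is_partition (out_edges G v) k p \<and>
     (\<forall>i<k. \<forall>i'<k. infinite {e\<in>out_edges G v. p e = i} \<and>
                   infinite {e\<in>out_edges G v. p e = i'} \<longrightarrow> i = i')"

definition O_move :: "('v,'e) dgraph \<Rightarrow> 'v \<Rightarrow> nat \<Rightarrow> ('e \<Rightarrow> nat) \<Rightarrow> ('v \<times> nat, 'e \<times> nat) dgraph" where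
  "O_move G v k p = \<lparr>
     gV = {(w,0) | w. w \<in> gV G \<and> w \<noteq> v} \<union> {(v,i) | i. i < k},
     gE = {(e,i) | e i. e \<in> gE G \<and> gr G e = v \<and> i < k} \<union> {(e,0) | e. e \<in> gE G \<and> gr G e \<noteq> v},
     gs = (\<lambda>(e,i). if gs G e = v then (v, p e) else (gs G e, 0)),
     gr = (\<lambda>(e,i). if gr G e = v then (v, i) else (gr G e, 0)) \<rparr>"

definition I_ok :: "('v,'e) dgraph \<Rightarrow> 'v \<Rightarrow> nat \<Rightarrow> ('e \<Rightarrow> nat) \<Rightarrow> bool" where
  "I_ok G v k p \<longleftrightarrow> v \<in> gV G \<and> is_regular G v \<and> \<not> is_source G v \<and>
     is_partition (in_edges G v) k p"

definition I_move :: "('v,'e) dgraph \<Rightarrow> 'v \<Rightarrow> nat \<Rightarrow> ('e \<Rightarrow> nat) \<Rightarrow> ('v \<times> nat, 'e \<times> nat) dgraph" where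
  "I_move G v k p = \<lparr>
     gV = {(w,0) | w. w \<in> gV G \<and> w \<noteq> v} \<union> {(v,i) | i. i < k},
     gE = {(e,i) | e i. e \<in> gE G \<and> gs G e = v \<and> i < k} \<union> {(e,0) | e. e \<in> gE G \<and> gs G e \<noteq> v},
     gs = (\<lambda>(e,i). if gs G e = v then (v, i) else (gs G e, 0)),
     gr = (\<lambda>(e,i). if gr G e = v then (v, p e) else (gr G e, 0)) \<rparr>"

text \<open>Graphs considered: vertices and edges are natural numbers (so edge sets are countable).\<close>
type_synonym ngraph = "(nat, nat) dgraph"

definition move_step :: "ngraph \<Rightarrow> ngraph \<Rightarrow> bool" where
  "move_step G H \<longleftrightarrow> wf_graph G \<and>
     ((\<exists>v. S_ok G v \<and> graph_iso (S_move G v) H) \<or>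
      (\<exists>u f. R_ok G u f \<and> graph_iso (R_move G u f) H) \<or>
      (\<exists>v k p. O_ok G v k p \<and> graph_iso (O_move G v k p) H) \<or>
      (\<exists>v k p. I_ok G v k p \<and> graph_iso (I_move G v k p) H))"

definition move_eq :: "ngraph \<Rightarrow> ngraph \<Rightarrow> bool" where
  "move_eq = (sup move_step move_step\<inverse>\<inverse>)\<^sup>*\<^sup>*"

text \<open>An n x n matrix is a function nat \<Rightarrow> nat \<Rightarrow> enat, indices 0..n-1.
  The graph G_A: vertices {0..<n}, edges encoded as triples (x,y,k) with k < A x y.\<close>
definition mat_graph :: "nat \<Rightarrow> (nat \<Rightarrow> nat \<Rightarrow> enat) \<Rightarrow> ngraph" where
  "mat_graph n A = \<lparr> gV = {..<n},
     gE = {prod_encode (x, prod_encode (y, k)) | x y k. x < n \<and> y < n \<and> enat k < A x y},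
     gs = (\<lambda>e. fst (prod_decode e)),
     gr = (\<lambda>e. fst (prod_decode (snd (prod_decode e)))) \<rparr>"

definition strongly_connected :: "('v,'e) dgraph \<Rightarrow> bool" where
  "strongly_connected G \<longleftrightarrow>
     (\<forall>x\<in>gV G. \<forall>y\<in>gV G. (x,y) \<in> {(gs G e, gr G e) | e. e \<in> gE G}\<^sup>*)"

definition irreducible_mat :: "nat \<Rightarrow> (nat \<Rightarrow> nat \<Rightarrow> enat) \<Rightarrow> bool" where
  "irreducible_mat n A \<longleftrightarrow> strongly_connected (mat_graph n A)"

definition mat_move_eq :: "nat \<Rightarrow> (nat \<Rightarrow> nat \<Rightarrow> enat) \<Rightarrow> nat \<Rightarrow> (nat \<Rightarrow> nat \<Rightarrow> enat) \<Rightarrow> bool" where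
  "mat_move_eq n A n' A' \<longleftrightarrow> move_eq (mat_graph n A) (mat_graph n' A')"

text \<open>J_{nm} (0-based): row i < m has 1 at position i, rows i \<ge> m are all \<infinity>.\<close>
definition J_mat :: "nat \<Rightarrow> nat \<Rightarrow> nat \<Rightarrow> nat \<Rightarrow> enat" where
  "J_mat n m i l = (if i < m then (if l = i then 1 else 0) else \<infinity>)"

end

theory Submission
  imports Defs
begin

definition enc :: "nat \<Rightarrow> nat \<Rightarrow> nat \<Rightarrow> nat" where
  "enc s r k = prod_encode (s, prod_encode (r, k))"
definition dS :: "nat \<Rightarrow> nat" where "dS e = fst (prod_decode e)"
definition dR :: "nat \<Rightarrow> nat" where "dR e = fst (prod_decode (snd (prod_decode e)))"
definition dK :: "nat \<Rightarrow> nat" where "dK e = snd (prod_decode (snd (prod_decode e)))"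

lemma d_enc[simp]: "dS (enc s r k) = s" "dR (enc s r k) = r" "dK (enc s r k) = k"
  by (simp_all add: enc_def dS_def dR_def dK_def)

lemma enc_eq[simp]: "enc s r k = enc s' r' k' \<longleftrightarrow> s = s' \<and> r = r' \<and> k = k'"
  by (metis d_enc)

lemma mg_simps[simp]: "gV (mat_graph n A) = {..<n}"
  "gs (mat_graph n A) e = dS e" "gr (mat_graph n A) e = dR e"
  by (simp_all add: mat_graph_def dS_def dR_def)

lemma mg_E: "e \<in> gE (mat_graph n A) \<longleftrightarrow> (\<exists>s r k. e = enc s r k \<and> s < n \<and> r < n \<and> enat k < A s r)"
  by (auto simp: mat_graph_def enc_def)

lemma wf_mg: "wf_graph (mat_graph n A)"
  by (auto simp: wf_graph_def mg_E)

lemma key: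
  fixes A A' :: "nat \<Rightarrow> nat \<Rightarrow> enat" and x :: "nat \<Rightarrow> nat"
  assumes jn: "j < n" and Aj: "\<forall>l<n. A j l = \<infinity>" and xnz: "\<exists>l<n. x l \<noteq> 0"
    and A'00: "A' 0 0 = enat (x j)" and A'0: "\<forall>l<n. A' 0 (Suc l) = enat (x l)"
    and A'j: "\<forall>l<Suc n. A' (Suc j) l = \<infinity>"
    and A's: "\<forall>s<n. s \<noteq> j \<longrightarrow> A' (Suc s) 0 = A s j \<and> (\<forall>l<n. A' (Suc s) (Suc l) = A s l)"
  shows "move_step (mat_graph n A) (mat_graph (Suc n) A')"
proof -
  define G where "G = mat_graph n A"
  define p where "p e = (if dK e < x (dR e) then 0 else 1::nat)" for e
  define OM where "OM = O_move G j 2 p"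
  define H where "H = mat_graph (Suc n) A'"
  define vs where "vs s r k = (if s = j then (if k < x r then 0 else Suc j) else Suc s)" for s r k
  define vr where "vr r i = (if r = j then (if i = 0 then 0 else Suc j) else Suc r)" for r i :: nat
  define kk where "kk s r k = (if s = j \<and> x r \<le> k then k - x r else k)" for s r k
  define \<psi> where "\<psi> = (\<lambda>(e,i). enc (vs (dS e) (dR e) (dK e)) (vr (dR e) i) (kk (dS e) (dR e) (dK e)))"
  define rr where "rr r' = (if r' = 0 \<or> r' = Suc j then j else r' - 1)" for r'
  define ss where "ss s' = (if s' = 0 then j else s' - 1)" for s'
  define \<psi>' where "\<psi>' = (\<lambda>e'. (enc (ss (dS e')) (rr (dR e'))
        (if dS e' = Suc j then dK e' + x (rr (dR e')) else dK e'), if dR e' = Suc j then 1 else (0::nat)))"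
  define \<phi> where "\<phi> = (\<lambda>(w,i). if w = j \<and> i = (0::nat) then 0 else Suc w)"
  define \<phi>' where "\<phi>' v = (if v = 0 then (j,0) else if v = Suc j then (j,1) else (v - 1, 0::nat))" for v
  have EOM: "a \<in> gE OM \<longleftrightarrow> (\<exists>s r k i. a = (enc s r k, i) \<and> s < n \<and> r < n \<and> enat k < A s r \<and>
        (r = j \<and> i < 2 \<or> r \<noteq> j \<and> i = 0))" for a
    by (auto simp: OM_def O_move_def G_def mg_E)
  have VOM: "gV OM = {(w,0)|w. w < n \<and> w \<noteq> j} \<union> {(j,i)|i. i < 2}"
    by (auto simp: OM_def O_move_def G_def)
  have Av: "A' (Suc s) (vr r i) = A s r" if "s < n" "r < n" "s \<noteq> j" for s r i
    using that A's by (auto simp: vr_def)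
  have \<psi>E: "\<psi> (enc s r k, i) = enc (vs s r k) (vr r i) (kk s r k)" for s r k i
    by (simp add: \<psi>_def)
  have \<psi>'E: "\<psi>' (enc s r k) = (enc (ss s) (rr r) (if s = Suc j then k + x (rr r) else k),
       if r = Suc j then 1 else 0)" for s r k
    by (simp add: \<psi>'_def)
  have A'0r: "A' 0 r = enat (x (rr r))" if "r < Suc n" for r
    using that A'00 A'0 jn by (cases r) (auto simp: rr_def)
  have A'0v: "A' 0 (vr r i) = enat (x r)" if "r < n" for r i
    using that A'00 A'0 jn by (auto simp: vr_def)
  have A'r: "A' (Suc s) r = A s (rr r)" if "s < n" "s \<noteq> j" "r < Suc n" for s r
    using that A's jn by (cases r) (auto simp: rr_def)
  have bijV: "bij_betw \<phi> (gV OM) (gV H)"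
    apply (rule bij_betw_byWitness[where f'=\<phi>'])
    using jn by (auto simp: VOM H_def \<phi>_def \<phi>'_def numeral_2_eq_2 less_Suc_eq split: if_splits)
  have bijE: "bij_betw \<psi> (gE OM) (gE H)"
  proof (rule bij_betw_byWitness[where f'=\<psi>'])
    show "\<forall>a\<in>gE OM. \<psi>' (\<psi> a) = a"
    proof
      fix a assume "a \<in> gE OM"
      then obtain s r k i where a: "a = (enc s r k, i)" "s<n" "r<n" "enat k < A s r"
         "r=j \<and> i<2 \<or> r\<noteq>j \<and> i=0" by (auto simp: EOM)
      show "\<psi>' (\<psi> a) = a"
        using a by (auto simp: \<psi>E \<psi>'E vs_def vr_def kk_def rr_def ss_def numeral_2_eq_2 less_Suc_eq)
    qed
    show "\<forall>a\<in>gE H. \<psi> (\<psi>' a) = a"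
    proof
      fix a assume "a \<in> gE H"
      then obtain s r k where a: "a = enc s r k" "s<Suc n" "r<Suc n" "enat k < A' s r"
        by (auto simp: H_def mg_E)
      show "\<psi> (\<psi>' a) = a"
      proof (cases "s = 0")
        case True
        then have "k < x (rr r)" using a A'0r by auto
        then show ?thesis using a True
          by (auto simp: \<psi>E \<psi>'E vs_def vr_def kk_def rr_def ss_def)
      next
        case False
        then show ?thesis using a
          by (auto simp: \<psi>E \<psi>'E vs_def vr_def kk_def rr_def ss_def)
      qed
    qed
    show "\<psi> ` gE OM \<subseteq> gE H"
    proof
      fix b assume "b \<in> \<psi> ` gE OM"
      then obtain a where b: "b = \<psi> a" "a \<in> gE OM" by auto
      then obtain s r k i where a: "a = (enc s r k, i)" "s<n" "r<n" "enat k < A s r"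
         "r=j \<and> i<2 \<or> r\<noteq>j \<and> i=0" by (auto simp: EOM)
      have lt: "vs s r k < Suc n" "vr r i < Suc n"
        using a jn by (auto simp: vs_def vr_def)
      have "enat (kk s r k) < A' (vs s r k) (vr r i)"
      proof (cases "s = j")
        case True
        show ?thesis
        proof (cases "k < x r")
          case True
          then show ?thesis using \<open>s = j\<close> A'0v[OF \<open>r<n\<close>] by (simp add: vs_def kk_def)
        next
          case False
          then show ?thesis using \<open>s = j\<close> A'j lt by (simp add: vs_def kk_def)
        qed
      next
        case False
        then show ?thesis using Av[OF \<open>s<n\<close> \<open>r<n\<close> False] a by (simp add: vs_def kk_def)
      qed
      then show "b \<in> gE H" using b a lt by (auto simp: H_def mg_E \<psi>E)
    qed
    show "\<psi>' ` gE H \<subseteq> gE OM"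
    proof
      fix b assume "b \<in> \<psi>' ` gE H"
      then obtain a where b: "b = \<psi>' a" "a \<in> gE H" by auto
      then obtain s r k where a: "a = enc s r k" "s<Suc n" "r<Suc n" "enat k < A' s r"
        by (auto simp: H_def mg_E)
      have lt: "ss s < n" "rr r < n" using a jn by (auto simp: ss_def rr_def)
      have "enat (if s = Suc j then k + x (rr r) else k) < A (ss s) (rr r)"
      proof (cases "s = 0 \<or> s = Suc j")
        case True
        then show ?thesis using Aj lt by (auto simp: ss_def)
      next
        case False
        then show ?thesis using A'r[of "s - 1" r] a by (auto simp: ss_def)
      qed
      then show "b \<in> gE OM" using b a lt unfolding EOM
        by (auto simp: \<psi>'E rr_def)
    qed
  qed
  have compat: "\<forall>e\<in>gE OM. gs H (\<psi> e) = \<phi> (gs OM e) \<and> gr H (\<psi> e) = \<phi> (gr OM e)"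
    by (auto simp: EOM H_def OM_def O_move_def G_def \<psi>_def \<phi>_def vs_def vr_def p_def)
  have "graph_iso OM H"
    unfolding graph_iso_def using bijV bijE compat by blast
  moreover have "O_ok G j 2 p"
  proof -
    have jV: "j \<in> gV G" using jn by (simp add: G_def)
    have o00: "enc j 0 (x 0) \<in> out_edges G j" using jn Aj
      by (auto simp: out_edges_def G_def mg_E)
    have ns: "\<not> is_sink G j" using o00 by (auto simp: is_sink_def)
    obtain l where l: "l < n" "x l \<noteq> 0" using xnz by blast
    have ol: "enc j l 0 \<in> out_edges G j" using l Aj jn
      by (auto simp: out_edges_def G_def mg_E)
    have part: "is_partition (out_edges G j) 2 p"
      unfolding is_partition_def
    proof (intro conjI allI impI ballI)
      fix e show "p e < 2" by (simp add: p_def)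
    next
      fix i :: nat assume "i < 2"
      then have "i = 0 \<or> i = 1" by auto
      then show "\<exists>e\<in>out_edges G j. p e = i"
      proof
        assume "i = 0" then show ?thesis using ol l by (intro bexI[of _ "enc j l 0"]) (auto simp: p_def)
      next
        assume "i = 1" then show ?thesis using o00 by (intro bexI[of _ "enc j 0 (x 0)"]) (auto simp: p_def)
      qed
    qed
    have fin: "finite {e\<in>out_edges G j. p e = 0}"
    proof (rule finite_subset)
      show "{e\<in>out_edges G j. p e = 0} \<subseteq> (\<lambda>(r,k). enc j r k) ` (SIGMA r:{..<n}. {..<x r})"
      proof
        fix e assume "e \<in> {e\<in>out_edges G j. p e = 0}"
        then obtain r k where "e = enc j r k" "r < n" "k < x r"
          by (auto simp: out_edges_def G_def mg_E p_def split: if_splits)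
        then show "e \<in> (\<lambda>(r,k). enc j r k) ` (SIGMA r:{..<n}. {..<x r})" by auto
      qed
    qed auto
    have "\<forall>i<2. \<forall>i'<2. infinite {e\<in>out_edges G j. p e = i} \<and>
                   infinite {e\<in>out_edges G j. p e = i'} \<longrightarrow> i = i'"
    proof (intro allI impI)
      fix i i' :: nat assume h: "i < 2" "i' < 2" "infinite {e\<in>out_edges G j. p e = i} \<and>
                   infinite {e\<in>out_edges G j. p e = i'}"
      then have "i \<noteq> 0" "i' \<noteq> 0" using fin by auto
      then show "i = i'" using h by auto
    qed
    then show ?thesis using jV ns part by (simp add: O_ok_def)
  qed
  ultimately show ?thesis
    unfolding move_step_def G_def OM_def H_def using wf_mg by blast
qed


theorem lemma8p1:
  fixes n m j :: nat and B :: "nat \<Rightarrow> nat \<Rightarrow> nat" and x :: "nat \<Rightarrow> nat"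
    and A A' :: "nat \<Rightarrow> nat \<Rightarrow> enat"
  assumes "m \<le> n" and "m \<noteq> n"
    and "\<forall>i l. m \<le> i \<and> i < n \<and> l < n \<longrightarrow> B i l = 0"
    and "A = (\<lambda>i l. J_mat n m i l + enat (B i l))"
    and "irreducible_mat n A"
    and "irreducible_mat m A"
    and "\<exists>l<n. x l \<noteq> 0"
    and "m \<le> j" and "j < n"
    and "A' = (\<lambda>k l. if k = 0 then (if l = 0 then enat (x j) else enat (x (l - 1)))
                     else if k - 1 < m then (if l = 0 then A (k - 1) j else A (k - 1) (l - 1))
                     else \<infinity>)"
  shows "mat_move_eq n A (n + 1) A'"
proof -
  have Ainf: "A s l = \<infinity>" if "m \<le> s" for s l
    using that assms(4) by (simp add: J_mat_def)
  have "move_step (mat_graph n A) (mat_graph (Suc n) A')"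
  proof (rule key)
    show "j < n" by fact
    show "\<forall>l<n. A j l = \<infinity>" using Ainf assms(8) by blast
    show "\<exists>l<n. x l \<noteq> 0" by fact
    show "A' 0 0 = enat (x j)" using assms(10) by simp
    show "\<forall>l<n. A' 0 (Suc l) = enat (x l)" using assms(10) by simp
    show "\<forall>l<Suc n. A' (Suc j) l = \<infinity>" using assms(10) assms(8) by simp
    show "\<forall>s<n. s \<noteq> j \<longrightarrow> A' (Suc s) 0 = A s j \<and> (\<forall>l<n. A' (Suc s) (Suc l) = A s l)"
      using assms(10) Ainf by auto
  qed
  then show ?thesis
    unfolding mat_move_eq_def move_eq_def by auto
qed

end
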